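(* Let $n\ge1$ and for $a_0,\dots,a_n\in[0,1]$ and $p\in[0,1]$ put $$D(a_0,\dots,a_n;p)=\sum_{k=0}^n\binom{n}{k}p^k(1-p)^{n-k}|p-a_k|.$$ Suppose $(a_0,\dots,a_n)\in[0,1]^{n+1}$ minimizes $\max_{p\in[0,1]}D(x_0,\dots,x_n;p)$ over all $(x_0,\dots,x_n)\in[0,1]^{n+1}$, and let $f(p)=D(a_0,\dots,a_n;p)$ and $M(f)=\{x\in[0,1]: f(x)=\max_{[0,1]}f\}$. Then $a_0<a_1<\cdots<a_n$, and $M(f)\cap(a_i,a_{i+1})\neq\emptyset$ for every $i=0,\dots,n-1$. *)

theory Defs
  imports "HOL-Analysis.Analysis"
begin

definition D :: "nat \<Rightarrow> (nat \<Rightarrow> real) \<Rightarrow> real \<Rightarrow> real" where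
  "D n a p = (\<Sum>k=0..n. real (n choose k) * p ^ k * (1 - p) ^ (n - k) * \<bar>p - a k\<bar>)"

definition maxD :: "nat \<Rightarrow> (nat \<Rightarrow> real) \<Rightarrow> real" where
  "maxD n a = (SUP p\<in>{0..1}. D n a p)"

definition maxset :: "nat \<Rightarrow> (nat \<Rightarrow> real) \<Rightarrow> real set" where
  "maxset n a = {x \<in> {0..1}. D n a x = maxD n a}"

end

theory Submission
  imports Defs
begin

definition bern :: "nat \<Rightarrow> nat \<Rightarrow> real \<Rightarrow> real" where
  "bern n k p = real (n choose k) * p ^ k * (1 - p) ^ (n - k)"

lemma D_bern: "D n a p = (\<Sum>k=0..n. bern n k p * \<bar>p - a k\<bar>)"
  by (simp add: D_def bern_def)

lemma bern_nonneg: "p \<in> {0..1} \<Longrightarrow> 0 \<le> bern n k p"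
  by (auto simp: bern_def)

lemma bern_pos: "0 < p \<Longrightarrow> p < 1 \<Longrightarrow> k \<le> n \<Longrightarrow> 0 < bern n k p"
  by (auto simp: bern_def)

lemma bern_sum: "(\<Sum>k=0..n. bern n k p) = 1"
proof -
  have "(p + (1 - p))^n = (\<Sum>k\<le>n. real (n choose k) * p^k * (1-p)^(n-k))"
    by (rule binomial_ring)
  thus ?thesis by (simp add: bern_def atLeast0AtMost)
qed

lemma bern_le1: assumes "p \<in> {0..1}" "k \<le> n" shows "bern n k p \<le> 1"
proof -
  have "bern n k p \<le> (\<Sum>j=0..n. bern n j p)"
    by (rule member_le_sum) (use assms bern_nonneg in auto)
  thus ?thesis by (simp add: bern_sum)
qed

lemma D_nonneg: "p \<in> {0..1} \<Longrightarrow> 0 \<le> D n a p"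
  unfolding D_bern by (intro sum_nonneg mult_nonneg_nonneg bern_nonneg abs_ge_zero) auto

lemma D_cont: "continuous_on S (D n a)"
  unfolding D_def by (intro continuous_intros)

lemma D_cont_at: "isCont (D n a) x"
  using D_cont[of UNIV n a] by (simp add: continuous_on_eq_continuous_at)

lemma maxD_attained:
  "\<exists>p0\<in>{0..1}. maxD n a = D n a p0 \<and> (\<forall>p\<in>{0..1}. D n a p \<le> D n a p0)"
proof -
  obtain p0 where p0: "p0 \<in> {0..1::real}" "\<forall>p\<in>{0..1}. D n a p \<le> D n a p0"
    using continuous_attains_sup[OF compact_Icc _ D_cont, of 0 1 n a] by auto
  have "maxD n a = D n a p0"
    unfolding maxD_def by (rule cSup_eq_maximum) (use p0 in auto)
  thus ?thesis using p0 by auto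
qed

lemma D_le_maxD: "p \<in> {0..1} \<Longrightarrow> D n a p \<le> maxD n a"
  using maxD_attained[of n a] by auto

lemma D_convex:
  assumes "l \<in> {0..1}" "p \<in> {0..1}"
  shows "D n (\<lambda>k. (1-l)*x k + l*y k) p \<le> (1-l) * D n x p + l * D n y p"
proof -
  have "\<And>k. bern n k p * \<bar>p - ((1-l)*x k + l*y k)\<bar> \<le> (1-l) * (bern n k p * \<bar>p - x k\<bar>) + l * (bern n k p * \<bar>p - y k\<bar>)"
  proof -
    fix k
    have "\<bar>p - ((1-l)*x k + l*y k)\<bar> = \<bar>(1-l)*(p - x k) + l*(p - y k)\<bar>" by (simp add: algebra_simps)
    also have "\<dots> \<le> \<bar>(1-l)*(p - x k)\<bar> + \<bar>l*(p - y k)\<bar>" by (rule abs_triangle_ineq)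
    also have "\<dots> = (1-l)*\<bar>p - x k\<bar> + l*\<bar>p - y k\<bar>" using assms by (simp add: abs_mult)
    finally have "\<bar>p - ((1-l)*x k + l*y k)\<bar> \<le> (1-l)*\<bar>p - x k\<bar> + l*\<bar>p - y k\<bar>" .
    from mult_left_mono[OF this bern_nonneg[OF assms(2)]]
    show "bern n k p * \<bar>p - ((1-l)*x k + l*y k)\<bar> \<le> (1-l) * (bern n k p * \<bar>p - x k\<bar>) + l * (bern n k p * \<bar>p - y k\<bar>)"
      by (simp add: algebra_simps)
  qed
  hence "D n (\<lambda>k. (1-l)*x k + l*y k) p \<le> (\<Sum>k=0..n. (1-l) * (bern n k p * \<bar>p - x k\<bar>) + l * (bern n k p * \<bar>p - y k\<bar>))"
    unfolding D_bern by (intro sum_mono) auto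
  also have "\<dots> = (1-l) * D n x p + l * D n y p"
    by (simp add: D_bern sum.distrib sum_distrib_left)
  finally show ?thesis .
qed

lemma D_lip:
  assumes "p \<in> {0..1}"
  shows "D n (\<lambda>k. x k + s * t k) p \<le> D n x p + \<bar>s\<bar> * (\<Sum>k=0..n. \<bar>t k\<bar>)"
proof -
  have "\<And>k. k \<in> {0..n} \<Longrightarrow> bern n k p * \<bar>p - (x k + s * t k)\<bar> \<le> bern n k p * \<bar>p - x k\<bar> + \<bar>s\<bar> * \<bar>t k\<bar>"
  proof -
    fix k assume k: "k \<in> {0..n}"
    have b0: "0 \<le> bern n k p" "bern n k p \<le> 1" using bern_nonneg bern_le1 assms k by auto
    have tri: "\<bar>p - (x k + s * t k)\<bar> \<le> \<bar>p - x k\<bar> + \<bar>s\<bar> * \<bar>t k\<bar>"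
      by (simp add: abs_mult[symmetric])
    have "bern n k p * \<bar>p - (x k + s * t k)\<bar> \<le> bern n k p * \<bar>p - x k\<bar> + bern n k p * (\<bar>s\<bar> * \<bar>t k\<bar>)"
      using mult_left_mono[OF tri b0(1)] by (simp add: algebra_simps)
    also have "bern n k p * (\<bar>s\<bar> * \<bar>t k\<bar>) \<le> \<bar>s\<bar> * \<bar>t k\<bar>"
      using mult_right_mono[OF b0(2), of "\<bar>s\<bar> * \<bar>t k\<bar>"] by simp
    finally show "bern n k p * \<bar>p - (x k + s * t k)\<bar> \<le> bern n k p * \<bar>p - x k\<bar> + \<bar>s\<bar> * \<bar>t k\<bar>" by simp
  qed
  hence "D n (\<lambda>k. x k + s * t k) p \<le> (\<Sum>k=0..n. bern n k p * \<bar>p - x k\<bar> + \<bar>s\<bar> * \<bar>t k\<bar>)"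
    unfolding D_bern by (intro sum_mono) auto
  thus ?thesis by (simp add: D_bern sum.distrib sum_distrib_left)
qed

lemma D_at0: "D n x 0 = \<bar>x 0\<bar>"
proof -
  have "D n x 0 = bern n 0 0 * \<bar>0 - x 0\<bar> + (\<Sum>k\<in>{0..n}-{0}. bern n k 0 * \<bar>0 - x k\<bar>)"
    unfolding D_bern by (subst sum.remove[of _ 0]) auto
  also have "(\<Sum>k\<in>{0..n}-{0}. bern n k 0 * \<bar>0 - x k\<bar>) = 0"
    by (rule sum.neutral) (auto simp: bern_def)
  finally show ?thesis by (simp add: bern_def)
qed

lemma D_at1: "D n x 1 = \<bar>1 - x n\<bar>"
proof -
  have "D n x 1 = bern n n 1 * \<bar>1 - x n\<bar> + (\<Sum>k\<in>{0..n}-{n}. bern n k 1 * \<bar>1 - x k\<bar>)"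
    unfolding D_bern by (subst sum.remove[of _ n]) auto
  also have "(\<Sum>k\<in>{0..n}-{n}. bern n k 1 * \<bar>1 - x k\<bar>) = 0"
    by (rule sum.neutral) (auto simp: bern_def)
  finally show ?thesis by (simp add: bern_def)
qed

definition clamp :: "real \<Rightarrow> real" where "clamp v = max 0 (min 1 v)"

lemma D_clamp: "p \<in> {0..1} \<Longrightarrow> D n (\<lambda>k. clamp (x k)) p \<le> D n x p"
  unfolding D_bern
  by (intro sum_mono mult_left_mono bern_nonneg) (auto simp: clamp_def)

lemma improve_delta:
  assumes pt: "\<forall>q\<in>{0..1}. D n a q = maxD n a \<longrightarrow> (\<exists>d>0. D n (\<lambda>k. a k + d * t k) q < maxD n a)"
  shows "\<exists>d>0. \<forall>p\<in>{0..1}. D n (\<lambda>k. a k + d * t k) p < maxD n a"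
proof (rule ccontr)
  define m where "m = maxD n a"
  define T where "T = (\<Sum>k=0..n. \<bar>t k\<bar>)"
  assume nt: "\<not> ?thesis"
  have ex: "\<exists>p. p \<in> {0..1} \<and> m \<le> D n (\<lambda>k. a k + inverse (real (Suc j)) * t k) p" for j
  proof -
    have "0 < inverse (real (Suc j))" by simp
    with nt have "\<not> (\<forall>p\<in>{0..1}. D n (\<lambda>k. a k + inverse (real (Suc j)) * t k) p < maxD n a)"
      by blast
    thus ?thesis unfolding m_def by (auto simp: not_less)
  qed
  obtain P where P0: "\<forall>j. P j \<in> {0..1} \<and> m \<le> D n (\<lambda>k. a k + inverse (real (Suc j)) * t k) (P j)"
  proof -
    have "\<forall>j. \<exists>p. p \<in> {0..1} \<and> m \<le> D n (\<lambda>k. a k + inverse (real (Suc j)) * t k) p"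
      using ex by blast
    hence "\<exists>P. \<forall>j. P j \<in> {0..1} \<and> m \<le> D n (\<lambda>k. a k + inverse (real (Suc j)) * t k) (P j)"
      by (rule choice)
    thus ?thesis using that by blast
  qed
  have P: "\<And>j. P j \<in> {0..1}" "\<And>j. m \<le> D n (\<lambda>k. a k + inverse (real (Suc j)) * t k) (P j)"
    using P0 by auto
  obtain q r where qr: "q \<in> {0..1}" "strict_mono (r :: nat \<Rightarrow> nat)" "(P \<circ> r) \<longlonglongrightarrow> q"
    using seq_compactE[OF compact_imp_seq_compact[OF compact_Icc[of 0 1]], of P] P(1) by blast
  define s where "s j = inverse (real (Suc (r j)))" for j
  have s_lim: "s \<longlonglongrightarrow> 0"
    using LIMSEQ_subseq_LIMSEQ[OF LIMSEQ_inverse_real_of_nat qr(2)] unfolding s_def o_def by simp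
  have s_pos: "0 < s j" for j by (simp add: s_def)
  have low: "m - s j * T \<le> D n a (P (r j))" for j
    using D_lip[OF P(1)[of "r j"], of n a "s j" t] P(2)[of "r j"] s_pos[of j]
    by (simp add: s_def T_def)
  have DPlim: "(\<lambda>j. D n a (P (r j))) \<longlonglongrightarrow> D n a q"
    using isCont_tendsto_compose[OF D_cont_at qr(3)] by (simp add: o_def)
  have lowlim: "(\<lambda>j. m - s j * T) \<longlonglongrightarrow> m"
    using tendsto_diff[OF tendsto_const tendsto_mult[OF s_lim tendsto_const], of m T] by simp
  have "m \<le> D n a q"
    using LIMSEQ_le[OF lowlim DPlim] low by blast
  moreover have "D n a q \<le> m" using D_le_maxD qr(1) m_def by blast
  ultimately have "D n a q = m" by simp
  then obtain d where d: "d > 0" "D n (\<lambda>k. a k + d * t k) q < m"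
    using pt[rule_format, OF qr(1)] unfolding m_def by blast
  define y where "y = (\<lambda>k. a k + d * t k)"
  have Dylim: "(\<lambda>j. D n y (P (r j))) \<longlonglongrightarrow> D n y q"
    using isCont_tendsto_compose[OF D_cont_at qr(3)] by (simp add: o_def)
  have ev1: "eventually (\<lambda>j. D n y (P (r j)) < m) sequentially"
    using order_tendstoD(2)[OF Dylim] d(2) unfolding y_def by blast
  have ev2: "eventually (\<lambda>j. s j < d) sequentially"
    using order_tendstoD(2)[OF s_lim d(1)] .
  obtain j where j: "D n y (P (r j)) < m" "s j < d"
    using eventually_happens[OF eventually_conj[OF ev1 ev2]] by auto
  define l where "l = s j / d"
  have l01: "l \<in> {0..1}" "0 < l" using j(2) s_pos[of j] d(1) by (auto simp: l_def)
  have ld: "l * d = s j" using d(1) by (simp add: l_def)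
  have eq: "(\<lambda>k. (1-l) * a k + l * y k) = (\<lambda>k. a k + s j * t k)"
  proof
    fix k
    have "(1-l) * a k + l * y k = a k + (l * d) * t k" by (simp add: y_def algebra_simps)
    thus "(1-l) * a k + l * y k = a k + s j * t k" by (simp only: ld)
  qed
  have "m \<le> D n (\<lambda>k. (1-l) * a k + l * y k) (P (r j))"
    using P(2)[of "r j"] unfolding eq s_def .
  also have "\<dots> \<le> (1-l) * D n a (P (r j)) + l * D n y (P (r j))"
    by (rule D_convex[OF l01(1) P(1)])
  also have "\<dots> < (1-l) * m + l * m"
  proof -
    have "(1-l) * D n a (P (r j)) \<le> (1-l) * m"
      using D_le_maxD[OF P(1)] l01(1) m_def by (intro mult_left_mono) auto
    moreover have "l * D n y (P (r j)) < l * m" using j(1) l01(2) by simp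
    ultimately show ?thesis by simp
  qed
  finally show False by (simp add: algebra_simps)
qed

lemma improve:
  assumes pt: "\<forall>q\<in>{0..1}. D n a q = maxD n a \<longrightarrow> (\<exists>d>0. D n (\<lambda>k. a k + d * t k) q < maxD n a)"
  shows "\<exists>x. (\<forall>k\<le>n. x k \<in> {0..1}) \<and> maxD n x < maxD n a"
proof -
  obtain d where d: "\<forall>p\<in>{0..1}. D n (\<lambda>k. a k + d * t k) p < maxD n a"
    using improve_delta[OF pt] by blast
  define x where "x k = clamp (a k + d * t k)" for k
  obtain p0 where p0: "p0 \<in> {0..1}" "maxD n x = D n x p0"
    using maxD_attained[of n x] by blast
  have "D n x p0 \<le> D n (\<lambda>k. a k + d * t k) p0"
    unfolding x_def by (rule D_clamp[OF p0(1)])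
  with d p0 have "maxD n x < maxD n a" by fastforce
  moreover have "\<forall>k\<le>n. x k \<in> {0..1}" by (auto simp: x_def clamp_def)
  ultimately show ?thesis by blast
qed

lemma term_le_D:
  assumes "p \<in> {0..1}" "k \<le> n"
  shows "bern n k p * \<bar>p - a k\<bar> \<le> D n a p"
  unfolding D_bern
  by (rule member_le_sum) (use assms in \<open>auto intro!: mult_nonneg_nonneg bern_nonneg\<close>)

lemma maxD_pos: "0 < maxD n a"
proof (rule ccontr)
  assume "\<not> 0 < maxD n a"
  hence z: "D n a p = 0" if "p \<in> {0..1}" for p
    using D_nonneg[OF that] D_le_maxD[OF that] by (metis antisym not_less order_trans)
  have "\<bar>p - a 0\<bar> = 0" if "p \<in> {0<..<1}" for p
  proof -
    have "bern n 0 p * \<bar>p - a 0\<bar> \<le> 0" using term_le_D[of p 0 n a] z[of p] that by auto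
    moreover have "0 < bern n 0 p" using bern_pos[of p 0 n] that by auto
    ultimately show ?thesis
    proof (cases "\<bar>p - a 0\<bar> = 0")
      case False
      hence "0 < \<bar>p - a 0\<bar>" by simp
      from mult_pos_pos[OF \<open>0 < bern n 0 p\<close> this] \<open>bern n 0 p * \<bar>p - a 0\<bar> \<le> 0\<close>
      show ?thesis by linarith
    qed
  qed
  from this[of "1/2"] this[of "1/3"] show False by auto
qed

lemma D_lin:
  assumes "\<forall>k\<le>n. t k = 0 \<or> (a k \<noteq> q \<and> d * \<bar>t k\<bar> \<le> \<bar>q - a k\<bar>)" "d \<ge> 0"
  shows "D n (\<lambda>k. a k + d * t k) q = D n a q + d * (\<Sum>k=0..n. bern n k q * t k * sgn (a k - q))"
proof -
  have "\<And>k. k \<in> {0..n} \<Longrightarrow> bern n k q * \<bar>q - (a k + d * t k)\<bar> = bern n k q * \<bar>q - a k\<bar> + d * (bern n k q * t k * sgn (a k - q))"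
  proof -
    fix k assume k: "k \<in> {0..n}"
    have "\<bar>q - (a k + d * t k)\<bar> = \<bar>q - a k\<bar> + d * t k * sgn (a k - q)"
    proof (cases "t k = 0")
      case True thus ?thesis by simp
    next
      case False
      hence h: "a k \<noteq> q" "d * \<bar>t k\<bar> \<le> \<bar>q - a k\<bar>" using assms k by auto
      have "- \<bar>d * t k\<bar> \<le> d * t k" "d * t k \<le> \<bar>d * t k\<bar>" by auto
      moreover have "\<bar>d * t k\<bar> = d * \<bar>t k\<bar>" using assms(2) by (simp add: abs_mult)
      ultimately show ?thesis using h
        by (cases "a k < q") (auto simp: sgn_if abs_if)
    qed
    thus "bern n k q * \<bar>q - (a k + d * t k)\<bar> = bern n k q * \<bar>q - a k\<bar> + d * (bern n k q * t k * sgn (a k - q))"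
      by (simp add: algebra_simps)
  qed
  hence "D n (\<lambda>k. a k + d * t k) q = (\<Sum>k=0..n. bern n k q * \<bar>q - a k\<bar> + d * (bern n k q * t k * sgn (a k - q)))"
    unfolding D_bern by (intro sum.cong) auto
  thus ?thesis by (simp add: D_bern sum.distrib sum_distrib_left)
qed

lemma kink:
  assumes q: "0 < q" "q < 1" and qm: "D n a q = maxD n a" and k: "k \<le> n" "a k = q"
  shows False
proof -
  define c where "c j = (if a j = q then 0 else sgn (q - a j))" for j
  define P where "P p = (\<Sum>j=0..n. real (n choose j) * p ^ j * (1 - p) ^ (n - j) * ((p - a j) * c j))" for p
  define e where "e j = (if a j = q then 1 else (0::real))" for j
  define B where "B p = (\<Sum>j=0..n. e j * bern n j p)" for p
  have Bq: "0 < B q"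
  proof -
    have "bern n k q \<le> B q" unfolding B_def
      using member_le_sum[of k "{0..n}" "\<lambda>j. e j * bern n j q"] k bern_nonneg[of q n] q
      by (auto simp: e_def)
    thus ?thesis using bern_pos[OF q k(1)] by simp
  qed
  have Bcont: "isCont B q" unfolding B_def bern_def by (intro continuous_intros)
  have termeq: "bern n j p * \<bar>p - a j\<bar> = bern n j p * ((p - a j) * c j) + \<bar>p - q\<bar> * (e j * bern n j p)"
    if "a j \<noteq> q \<longrightarrow> \<bar>p - q\<bar> < \<bar>q - a j\<bar>" for j p
  proof (cases "a j = q")
    case True thus ?thesis by (simp add: c_def e_def)
  next
    case False
    hence "\<bar>p - q\<bar> < \<bar>q - a j\<bar>" using that by auto
    hence "\<bar>p - a j\<bar> = (p - a j) * sgn (q - a j)" by (auto simp: sgn_if abs_if)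
    thus ?thesis using False by (simp add: c_def e_def)
  qed
  have ident: "D n a p = P p + \<bar>p - q\<bar> * B p" if "\<forall>j\<le>n. a j \<noteq> q \<longrightarrow> \<bar>p - q\<bar> < \<bar>q - a j\<bar>" for p
  proof -
    have "D n a p = (\<Sum>j=0..n. bern n j p * ((p - a j) * c j) + \<bar>p - q\<bar> * (e j * bern n j p))"
      unfolding D_bern using that termeq by (intro sum.cong) auto
    thus ?thesis by (simp add: sum.distrib sum_distrib_left P_def B_def bern_def)
  qed
  have Pq: "P q = D n a q" using ident[of q] by auto
  have "P differentiable (at q)" unfolding P_def by (intro derivative_intros) auto
  then obtain P' where P': "(P has_real_derivative P') (at q)" using real_differentiable_def by blast
  hence lim: "((\<lambda>h. (P (q + h) - P q) / h) \<longlongrightarrow> P') (at 0)" by (simp add: DERIV_def)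
  have ev: "eventually (\<lambda>h. (\<forall>j\<in>{..n}. a j \<noteq> q \<longrightarrow> \<bar>h\<bar> < \<bar>q - a j\<bar>) \<and> \<bar>h\<bar> < min q (1 - q)) (at (0::real))"
  proof (intro eventually_conj eventually_ball_finite ballI)
    show "finite {..n}" by simp
    fix j assume "j \<in> {..n}"
    show "eventually (\<lambda>h. a j \<noteq> q \<longrightarrow> \<bar>h\<bar> < \<bar>q - a j\<bar>) (at (0::real))"
    proof (cases "a j = q")
      case True thus ?thesis by simp
    next
      case False
      thus ?thesis unfolding eventually_at
        by (intro exI[of _ "\<bar>q - a j\<bar>"]) (auto simp: dist_real_def)
    qed
  next
    show "eventually (\<lambda>h. \<bar>h\<bar> < min q (1 - q)) (at (0::real))"
      unfolding eventually_at using q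
      by (intro exI[of _ "min q (1 - q)"]) (auto simp: dist_real_def)
  qed
  have key: "P (q + h) - P q \<le> - \<bar>h\<bar> * B (q + h)"
    if "(\<forall>j\<in>{..n}. a j \<noteq> q \<longrightarrow> \<bar>h\<bar> < \<bar>q - a j\<bar>) \<and> \<bar>h\<bar> < min q (1 - q)" for h
  proof -
    have "q + h \<in> {0..1}" using that by auto
    hence "D n a (q + h) \<le> D n a q" using D_le_maxD qm by metis
    moreover have "D n a (q + h) = P (q + h) + \<bar>h\<bar> * B (q + h)" using ident[of "q + h"] that by auto
    ultimately show ?thesis using Pq by simp
  qed
  have evr: "eventually (\<lambda>h. - B (q + h) \<ge> (P (q + h) - P q) / h) (at_right (0::real))"
  proof -
    have "eventually (\<lambda>h. h \<in> {0<..<1}) (at_right (0::real))" by (rule eventually_at_right_real) simp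
    moreover have "eventually (\<lambda>h. (\<forall>j\<in>{..n}. a j \<noteq> q \<longrightarrow> \<bar>h\<bar> < \<bar>q - a j\<bar>) \<and> \<bar>h\<bar> < min q (1 - q)) (at_right (0::real))"
      using ev unfolding eventually_at_split by blast
    ultimately show ?thesis
    proof eventually_elim
      case (elim h)
      hence "P (q + h) - P q \<le> - h * B (q + h)" using key[of h] by auto
      thus ?case using elim by (simp add: divide_le_eq algebra_simps)
    qed
  qed
  have evl: "eventually (\<lambda>h. B (q + h) \<le> (P (q + h) - P q) / h) (at_left (0::real))"
  proof -
    have "eventually (\<lambda>h. h \<in> {-1<..<0}) (at_left (0::real))" by (rule eventually_at_left_real) simp
    moreover have "eventually (\<lambda>h. (\<forall>j\<in>{..n}. a j \<noteq> q \<longrightarrow> \<bar>h\<bar> < \<bar>q - a j\<bar>) \<and> \<bar>h\<bar> < min q (1 - q)) (at_left (0::real))"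
      using ev unfolding eventually_at_split by blast
    ultimately show ?thesis
    proof eventually_elim
      case (elim h)
      hence "P (q + h) - P q \<le> h * B (q + h)" using key[of h] by auto
      thus ?case using elim by (simp add: le_divide_eq algebra_simps)
    qed
  qed
  have Blim: "((\<lambda>h. B (q + h)) \<longlongrightarrow> B q) (at (0::real))"
  proof -
    have "((\<lambda>h. q + h) \<longlongrightarrow> q) (at (0::real))"
      using tendsto_add[OF tendsto_const tendsto_ident_at, of q 0 UNIV] by simp
    thus ?thesis using isCont_tendsto_compose[OF Bcont] by blast
  qed
  have r1: "P' \<le> - B q"
    using lim Blim unfolding filterlim_at_split
    by (intro tendsto_le[OF _ tendsto_minus[of "\<lambda>h. B (q + h)"] _ evr]) auto
  have r2: "B q \<le> P'"
    using lim Blim unfolding filterlim_at_split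
    by (intro tendsto_le[OF _ _ _ evl]) auto
  from r1 r2 Bq show False by simp
qed

lemma closed_away:
  fixes S :: "real set" and z :: real
  assumes "closed S" "z \<notin> S"
  obtains e where "e > 0" "\<And>y. y \<in> S \<Longrightarrow> e \<le> \<bar>y - z\<bar>"
proof -
  have "open (- S)" using assms(1) by (simp add: open_Compl)
  then obtain e where e: "e > 0" "\<And>y. dist y z < e \<Longrightarrow> y \<in> - S"
    using assms(2) unfolding open_dist by blast
  show ?thesis
  proof (rule that[OF e(1)])
    fix y assume "y \<in> S"
    thus "e \<le> \<bar>y - z\<bar>" using e(2)[of y] by (force simp: dist_real_def)
  qed
qed

lemma L_bound:
  fixes q th u v :: real
  assumes "0 \<le> q" "q \<le> 1" "0 \<le> th" "th \<le> 1" "q \<noteq> th" "q \<noteq> v"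
    "\<not> (th < q \<and> q < v)"
  shows "- th * (1 - q) * sgn (th - q) + (1 - th) * q * sgn (v - q) \<le> - \<bar>q - th\<bar>"
proof -
  have p1: "0 \<le> th * (1 - q)" "0 \<le> (1 - th) * q" using assms by auto
  show ?thesis
  proof (cases "q < th")
    case True
    show ?thesis
    proof (cases "q < v")
      case True
      with \<open>q < th\<close> show ?thesis by (simp add: sgn_if algebra_simps)
    next
      case False
      with \<open>q < th\<close> assms(6) have "v < q" by simp
      with \<open>q < th\<close> p1 show ?thesis by (simp add: sgn_if algebra_simps)
    qed
  next
    case False
    hence "th < q" using assms(5) by simp
    hence "v < q" using assms(6,7) by (cases "v < q") auto
    with \<open>th < q\<close> show ?thesis by (simp add: sgn_if algebra_simps)
  qed
qed

lemma gap_impossible: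
  assumes n1: "n \<ge> 1" and box: "\<forall>k\<le>n. a k \<in> {0..1}" and i: "i < n"
    and gap: "\<forall>q. q \<in> {0..1} \<and> D n a q = maxD n a \<longrightarrow> \<not> (a i < q \<and> q < a (Suc i))"
  shows "\<exists>x. (\<forall>k\<le>n. x k \<in> {0..1}) \<and> maxD n x < maxD n a"
proof -
  define m where "m = maxD n a"
  define Ms where "Ms = {x \<in> {0..1}. D n a x = m}"
  have mpos: "0 < m" using maxD_pos m_def by blast
  have clM: "closed Ms" unfolding Ms_def
    by (rule continuous_closed_preimage_constant[OF D_cont closed_atLeastAtMost])
  have kinkM: "a k \<noteq> q" if "q \<in> Ms" "0 < q" "q < 1" "k \<le> n" for q k
    using kink[of q n a k] that by (auto simp: Ms_def m_def)
  have gapM: "\<not> (a i < q \<and> q < a (Suc i))" if "q \<in> Ms" for q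
    using gap that by (auto simp: Ms_def m_def)
  define th where "th = a i"
  have th01: "0 \<le> th" "th \<le> 1" using box i by (auto simp: th_def)
  have a0: "a 0 = m" if "0 \<in> Ms" using that box by (auto simp: Ms_def D_at0)
  have an: "a n = 1 - m" if "1 \<in> Ms" using that box by (auto simp: Ms_def D_at1)
  obtain al where al: "0 < al" "al \<le> 1/2" "\<And>q. q \<in> Ms \<Longrightarrow> q < al \<Longrightarrow> 0 \<in> Ms \<and> q < a 0"
  proof (cases "0 \<in> Ms")
    case True
    show ?thesis
      by (rule that[of "min (a 0) (1/2)"]) (use True a0 mpos in auto)
  next
    case False
    obtain e where e: "e > 0" "\<And>y. y \<in> Ms \<Longrightarrow> e \<le> \<bar>y - 0\<bar>" using closed_away[OF clM False] by blast
    show ?thesis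
    proof (rule that[of "min e (1/2)"])
      fix q assume "q \<in> Ms" "q < min e (1/2)"
      moreover have "0 \<le> q" using \<open>q \<in> Ms\<close> by (auto simp: Ms_def)
      ultimately show "0 \<in> Ms \<and> q < a 0" using e(2)[of q] by auto
    qed (use e in auto)
  qed
  obtain be where be: "be < 1" "1/2 \<le> be" "\<And>q. q \<in> Ms \<Longrightarrow> be < q \<Longrightarrow> 1 \<in> Ms \<and> a n < q"
  proof (cases "1 \<in> Ms")
    case True
    show ?thesis
      by (rule that[of "max (a n) (1/2)"]) (use True an mpos in auto)
  next
    case False
    obtain e where e: "e > 0" "\<And>y. y \<in> Ms \<Longrightarrow> e \<le> \<bar>y - 1\<bar>" using closed_away[OF clM False] by blast
    show ?thesis
    proof (rule that[of "max (1 - e) (1/2)"])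
      fix q assume "q \<in> Ms" "max (1 - e) (1/2) < q"
      moreover have "q \<le> 1" using \<open>q \<in> Ms\<close> by (auto simp: Ms_def)
      ultimately show "1 \<in> Ms \<and> a n < q" using e(2)[of q] by auto
    qed (use e in auto)
  qed
  define Ms' where "Ms' = Ms \<inter> {al..be}"
  have "closed Ms'" unfolding Ms'_def using clM by (intro closed_Int) auto
  moreover have "th \<notin> Ms'"
  proof
    assume "th \<in> Ms'"
    hence "th \<in> Ms" "0 < th" "th < 1" using al be by (auto simp: Ms'_def)
    thus False using kinkM[of th i] i by (auto simp: th_def)
  qed
  ultimately obtain r where r: "r > 0" "\<And>y. y \<in> Ms' \<Longrightarrow> r \<le> \<bar>y - th\<bar>" using closed_away by blast
  define c where "c = al ^ i * (1 - be) ^ (n - Suc i) * r"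
  have cpos: "0 < c" using al be r by (simp add: c_def)
  define ep where "ep = c / 4"
  define e0 where "e0 = (if 0 \<in> Ms then 1 else (0::real))"
  define e1 where "e1 = (if 1 \<in> Ms then 1 else (0::real))"
  define Ci where "Ci = real (n choose i)"
  define Ci1 where "Ci1 = real (n choose Suc i)"
  have Cpos: "0 < Ci" "0 < Ci1" using i by (auto simp: Ci_def Ci1_def)
  define t where "t k = (if k = i then - th / Ci else 0) + (if k = Suc i then (1 - th) / Ci1 else 0)
     + (if k = 0 then - ep * e0 else 0) + (if k = n then ep * e1 else 0)" for k
  have pt: "\<forall>q\<in>{0..1}. D n a q = maxD n a \<longrightarrow> (\<exists>d>0. D n (\<lambda>k. a k + d * t k) q < maxD n a)"
  proof (intro ballI impI)
    fix q :: real assume q01: "q \<in> {0..1}" and qm: "D n a q = maxD n a"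
    hence qM: "q \<in> Ms" by (simp add: Ms_def m_def)
    consider "q = 0" | "q = 1" | "0 < q" "q < 1" using q01 by fastforce
    thus "\<exists>d>0. D n (\<lambda>k. a k + d * t k) q < maxD n a"
    proof cases
      case 1
      hence M0: "0 \<in> Ms" using qM by simp
      have t0: "t 0 \<le> - ep" using n1 th01 Cpos M0 by (auto simp: t_def e0_def)
      have ep0: "0 < ep" using cpos by (simp add: ep_def)
      define d where "d = m / (2 * (- t 0))"
      have dpos: "0 < d" unfolding d_def by (rule divide_pos_pos) (use t0 ep0 mpos in auto)
      have "a 0 + d * t 0 = m / 2" using a0[OF M0] t0 ep0 by (simp add: d_def field_simps)
      hence "D n (\<lambda>k. a k + d * t k) 0 = m / 2" using mpos by (simp add: D_at0)
      thus ?thesis using dpos mpos 1 by (auto simp: m_def)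
    next
      case 2
      hence M1: "1 \<in> Ms" using qM by simp
      have tn: "t n \<ge> ep" using n1 th01 Cpos M1 i by (auto simp: t_def e1_def)
      have ep0: "0 < ep" using cpos by (simp add: ep_def)
      define d where "d = m / (2 * t n)"
      have dpos: "0 < d" unfolding d_def by (rule divide_pos_pos) (use tn ep0 mpos in auto)
      have "1 - (a n + d * t n) = m / 2" using an[OF M1] tn ep0 by (simp add: d_def field_simps)
      hence "D n (\<lambda>k. a k + d * t k) 1 = m / 2" using mpos by (simp add: D_at1)
      thus ?thesis using dpos mpos 2 by (auto simp: m_def)
    next
      case 3
      have nk: "a k \<noteq> q" if "k \<le> n" for k using kinkM[OF qM 3 that] .
      define G where "G = (\<Sum>k=0..n. bern n k q * t k * sgn (a k - q))"
      have Gneg: "G < 0"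
      proof -
        define s where "s k = sgn (a k - q)" for k
        have sb: "\<bar>s k\<bar> \<le> 1" for k by (simp add: s_def sgn_if)
        define X1 where "X1 = bern n i q * (- th / Ci) * s i"
        define X2 where "X2 = bern n (Suc i) q * ((1 - th) / Ci1) * s (Suc i)"
        define X3 where "X3 = bern n 0 q * (- ep * e0) * s 0"
        define X4 where "X4 = bern n n q * (ep * e1) * s n"
        have "G = (\<Sum>k=0..n. (if k = i then X1 else 0) + (if k = Suc i then X2 else 0)
                   + (if k = 0 then X3 else 0) + (if k = n then X4 else 0))"
          unfolding G_def
        proof (intro sum.cong refl)
          fix k
          show "bern n k q * t k * sgn (a k - q) = (if k = i then X1 else 0) + (if k = Suc i then X2 else 0)
                   + (if k = 0 then X3 else 0) + (if k = n then X4 else 0)"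
            unfolding t_def X1_def X2_def X3_def X4_def s_def
            by (simp add: ring_distribs)
        qed
        also have "\<dots> = X1 + X2 + X3 + X4" using i by (simp add: sum.distrib)
        finally have G: "G = X1 + X2 + X3 + X4" .
        define w where "w = q ^ i * (1 - q) ^ (n - Suc i)"
        have w0: "0 \<le> w" using 3 by (simp add: w_def)
        have nsi: "n - i = Suc (n - Suc i)" using i by simp
        define L where "L = - th * (1 - q) * s i + (1 - th) * q * s (Suc i)"
        have X12: "X1 + X2 = w * L"
          using Cpos unfolding X1_def X2_def w_def L_def bern_def Ci_def Ci1_def
          by (simp add: nsi field_simps)
        have Lb: "L \<le> - \<bar>q - th\<bar>"
          unfolding L_def s_def th_def
          using L_bound[of q "a i" "a (Suc i)"] 3 th01 nk[of i] nk[of "Suc i"] i gapM[OF qM]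
          by (simp add: th_def)
        have wL: "w * L \<le> - w * \<bar>q - th\<bar>" using mult_left_mono[OF Lb w0] by simp
        have X3e: "X3 = - ep * e0 * (1 - q) ^ n * s 0" by (simp add: X3_def bern_def)
        have X4e: "X4 = ep * e1 * q ^ n * s n" by (simp add: X4_def bern_def)
        have ep0: "0 < ep" using cpos by (simp add: ep_def)
        have e01: "0 \<le> e0" "e0 \<le> 1" "0 \<le> e1" "e1 \<le> 1" by (auto simp: e0_def e1_def)
        have qn: "0 \<le> q ^ n" "q ^ n \<le> 1" "0 \<le> (1 - q) ^ n" "(1 - q) ^ n \<le> 1"
          using 3 by (auto intro: power_le_one)
        have X3b: "\<bar>X3\<bar> \<le> ep" and X4b: "\<bar>X4\<bar> \<le> ep"
        proof -
          have "\<bar>e0 * (1 - q) ^ n * s 0\<bar> \<le> 1 * 1 * 1"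
            unfolding abs_mult using e01 qn sb[of 0] by (intro mult_mono) auto
          thus "\<bar>X3\<bar> \<le> ep" using ep0 unfolding X3e by (simp add: abs_mult)
          have "\<bar>e1 * q ^ n * s n\<bar> \<le> 1 * 1 * 1"
            unfolding abs_mult using e01 qn sb[of n] by (intro mult_mono) auto
          thus "\<bar>X4\<bar> \<le> ep" using ep0 unfolding X4e by (simp add: abs_mult)
        qed
        consider "q < al" | "be < q" | "al \<le> q" "q \<le> be" by linarith
        thus "G < 0"
        proof cases
          case 1
          have h: "0 \<in> Ms" "q < a 0" using al(3)[OF qM 1] by auto
          hence X3v: "X3 = - ep * (1 - q) ^ n" by (simp add: X3e e0_def s_def)
          have "\<bar>e1 * s n\<bar> \<le> 1" using e01 sb[of n] by (simp add: abs_mult mult_le_one)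
          hence "e1 * s n \<le> 1" by (simp add: abs_le_iff)
          hence "(e1 * s n) * (ep * q ^ n) \<le> 1 * (ep * q ^ n)"
            using ep0 qn by (intro mult_right_mono) auto
          hence X4v: "X4 \<le> ep * q ^ n" by (simp add: X4e algebra_simps)
          have "q ^ n < (1 - q) ^ n"
            using 1 al(2) 3 n1 by (intro power_strict_mono) auto
          hence lt: "ep * q ^ n < ep * (1 - q) ^ n" using ep0 by (rule mult_strict_left_mono)
          have "0 \<le> w * \<bar>q - th\<bar>" using w0 by simp
          hence "w * L \<le> 0" using wL by linarith
          thus ?thesis using G X12 X3v X4v lt by linarith
        next
          case 2
          have h: "1 \<in> Ms" "a n < q" using be(3)[OF qM 2] by auto
          hence X4v: "X4 = - ep * q ^ n" by (simp add: X4e e1_def s_def)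
          have "\<bar>e0 * s 0\<bar> \<le> 1" using e01 sb[of 0] by (simp add: abs_mult mult_le_one)
          hence "- (e0 * s 0) \<le> 1" by (simp add: abs_le_iff)
          hence "(- (e0 * s 0)) * (ep * (1 - q) ^ n) \<le> 1 * (ep * (1 - q) ^ n)"
            using ep0 qn by (intro mult_right_mono) auto
          hence X3v: "X3 \<le> ep * (1 - q) ^ n" by (simp add: X3e algebra_simps)
          have "(1 - q) ^ n < q ^ n"
            using 2 be(2) 3 n1 by (intro power_strict_mono) auto
          hence lt: "ep * (1 - q) ^ n < ep * q ^ n" using ep0 by (rule mult_strict_left_mono)
          have "0 \<le> w * \<bar>q - th\<bar>" using w0 by simp
          hence "w * L \<le> 0" using wL by linarith
          thus ?thesis using G X12 X3v X4v lt by linarith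
        next
          case 3
          have qM': "q \<in> Ms'" using qM 3 by (simp add: Ms'_def)
          have rq: "r \<le> \<bar>q - th\<bar>" using r(2)[OF qM'] .
          have "al ^ i \<le> q ^ i" using al(1) 3 by (intro power_mono) auto
          moreover have "(1 - be) ^ (n - Suc i) \<le> (1 - q) ^ (n - Suc i)" using be(1) 3 by (intro power_mono) auto
          ultimately have ww: "al ^ i * (1 - be) ^ (n - Suc i) \<le> w"
            unfolding w_def using al(1) be(1) \<open>al \<le> q\<close> by (intro mult_mono zero_le_power) auto
          have "c \<le> w * r" unfolding c_def using ww r(1) by (intro mult_right_mono) auto
          also have "w * r \<le> w * \<bar>q - th\<bar>" using rq w0 by (intro mult_left_mono) auto
          finally have "w * L \<le> - c" using wL by simp
          moreover have "X3 \<le> ep" "X4 \<le> ep" using X3b X4b by (simp_all add: abs_le_iff)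
          ultimately show ?thesis using G X12 cpos by (simp add: ep_def)
        qed
      qed
      define mu where "mu = Min ((\<lambda>k. \<bar>q - a k\<bar>) ` {0..n})"
      have mupos: "0 < mu" unfolding mu_def using nk by (subst Min_gr_iff) (auto, metis)
      have mule: "mu \<le> \<bar>q - a k\<bar>" if "k \<le> n" for k unfolding mu_def using that by (intro Min_le) auto
      define T where "T = 1 + (\<Sum>k=0..n. \<bar>t k\<bar>)"
      have Tpos: "1 \<le> T" by (simp add: T_def sum_nonneg)
      define d where "d = mu / T"
      have dpos: "0 < d" using mupos Tpos by (simp add: d_def)
      have cond: "\<forall>k\<le>n. t k = 0 \<or> (a k \<noteq> q \<and> d * \<bar>t k\<bar> \<le> \<bar>q - a k\<bar>)"
      proof (intro allI impI disjI2 conjI)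
        fix k assume k: "k \<le> n"
        show "a k \<noteq> q" using nk k .
        have "\<bar>t k\<bar> \<le> T" unfolding T_def
          using member_le_sum[of k "{0..n}" "\<lambda>k. \<bar>t k\<bar>"] k by auto
        hence "d * \<bar>t k\<bar> \<le> d * T" using dpos by (intro mult_left_mono) auto
        also have "d * T = mu" using Tpos by (simp add: d_def)
        finally show "d * \<bar>t k\<bar> \<le> \<bar>q - a k\<bar>" using mule[OF k] by simp
      qed
      have "D n (\<lambda>k. a k + d * t k) q = m + d * G"
        using D_lin[OF cond] dpos qm by (simp add: G_def m_def)
      moreover have "d * G < 0" using dpos Gneg by (simp add: mult_pos_neg)
      ultimately show ?thesis using dpos by (auto simp: m_def)
    qed
  qed
  show ?thesis using improve[OF pt] .
qed


theorem theorem2p2: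
  fixes n :: nat and a :: "nat \<Rightarrow> real"
  assumes "n \<ge> 1"
    and "\<forall>k\<le>n. a k \<in> {0..1}"
    and "\<forall>x :: nat \<Rightarrow> real. (\<forall>k\<le>n. x k \<in> {0..1}) \<longrightarrow> maxD n a \<le> maxD n x"
  shows "(\<forall>i<n. a i < a (Suc i)) \<and> (\<forall>i<n. maxset n a \<inter> {a i<..<a (Suc i)} \<noteq> {})"
proof -
  have P2: "maxset n a \<inter> {a i<..<a (Suc i)} \<noteq> {}" if i: "i < n" for i
  proof
    assume e: "maxset n a \<inter> {a i<..<a (Suc i)} = {}"
    have "\<forall>q. q \<in> {0..1} \<and> D n a q = maxD n a \<longrightarrow> \<not> (a i < q \<and> q < a (Suc i))"
      using e by (auto simp: maxset_def)
    from gap_impossible[OF assms(1,2) i this] obtain x where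
      x: "\<forall>k\<le>n. x k \<in> {0..1}" "maxD n x < maxD n a" by blast
    have "maxD n a \<le> maxD n x" using assms(3) x(1) by blast
    with x(2) show False by linarith
  qed
  have P1: "a i < a (Suc i)" if "i < n" for i
  proof -
    from P2[OF that] obtain z where "z \<in> {a i<..<a (Suc i)}" by blast
    thus ?thesis by simp
  qed
  show ?thesis using P1 P2 by blast
qed

end
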